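(* Let $K$ be a field of characteristic $p>0$ such that $K/k$ is a finitely generated field extension, where $k=\bigcap_{n\ge0}K^{p^n}$. Let $W_\bullet$ be a power tower on $K$, let $\mathcal{F}_i=T_{W_{i-1}/W_i}$ for $i\ge1$, and let $\mathcal{D}=\bigcup_{n\ge0}\operatorname{Diff}_{W_n}(K)$. Then for every $i\ge1$, $d(K/W_{i-1})(\mathcal{D})\cap TW_{i-1}=\mathcal{F}_i$. In particular $\mathcal{D}\cap TK=T_{K/W_1}$.
   Context: A power tower on $K$ is a sequence of subfields $W_0,W_1,\ldots$ with $W_j=W_i\cdot K^{p^j}$ whenever $j\le i$ ($\cdot$ = compositum in $K$; so $W_0=K$). For a field $F$, $TF$ is the space of derivations of $F$, $T_{F/A}$ those vanishing on a subfield $A$. For subfields $A\subseteq B$, $\operatorname{Diff}_A(B)$ is the union over $n$ of the $A$-linear maps $D:B\to B$ with $[b_0,[b_1,[\ldots,[b_n,D]\ldots]]]=0$ for all $b_i\in B$. For $k\subseteq W\subseteq K$, $d(K/W)$ sends $D\in\operatorname{Diff}_k(K)$ to its restriction $D|_W:W\to K$, an element of $\operatorname{Diff}_k(W)\otimes_W K$, identified with the $K$-span of $\iota\circ E$ ($E\in\operatorname{Diff}_k(W)$, $\iota:W\to K$ the inclusion) in $\operatorname{Hom}(W,K)$; $TW$ is viewed inside it via $E\mapsto \iota\circ E$. $d(K/K)$ is the identity. *)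

theory Defs
  imports Main
begin

text \<open>The ambient field K is the whole type 'a (a field). Subfields of K are sets.
  Maps on a subfield B are represented as total functions 'a \<Rightarrow> 'a that vanish outside B.\<close>

definition is_subfield :: "'a::field set \<Rightarrow> bool" where
  "is_subfield F \<longleftrightarrow> 0 \<in> F \<and> 1 \<in> F \<and> (\<forall>x\<in>F. \<forall>y\<in>F. x + y \<in> F \<and> x * y \<in> F)
     \<and> (\<forall>x\<in>F. - x \<in> F) \<and> (\<forall>x\<in>F. x \<noteq> 0 \<longrightarrow> inverse x \<in> F)"

definition field_gen :: "'a::field set \<Rightarrow> 'a set" where
  "field_gen A = \<Inter> {F. is_subfield F \<and> A \<subseteq> F}"

definition compositum :: "'a::field set \<Rightarrow> 'a set \<Rightarrow> 'a set" where
  "compositum A B = field_gen (A \<union> B)"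

definition frob_pow :: "nat \<Rightarrow> nat \<Rightarrow> 'a::field set" where
  "frob_pow p n = range (\<lambda>x::'a. x ^ (p ^ n))"

definition power_tower :: "nat \<Rightarrow> (nat \<Rightarrow> 'a::field set) \<Rightarrow> bool" where
  "power_tower p W \<longleftrightarrow> (\<forall>i. is_subfield (W i)) \<and>
     (\<forall>i j. j \<le> i \<longrightarrow> W j = compositum (W i) (frob_pow p j))"

definition derivations :: "'a::field set \<Rightarrow> ('a \<Rightarrow> 'a) set" where
  "derivations F = {D. (\<forall>x. x \<notin> F \<longrightarrow> D x = 0) \<and> (\<forall>x\<in>F. D x \<in> F) \<and>
      (\<forall>x\<in>F. \<forall>y\<in>F. D (x + y) = D x + D y) \<and>
      (\<forall>x\<in>F. \<forall>y\<in>F. D (x * y) = x * D y + y * D x)}"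

definition rel_derivations :: "'a::field set \<Rightarrow> 'a set \<Rightarrow> ('a \<Rightarrow> 'a) set" where
  "rel_derivations F A = {D \<in> derivations F. \<forall>a\<in>A. D a = 0}"

definition lin_maps :: "'a::field set \<Rightarrow> 'a set \<Rightarrow> ('a \<Rightarrow> 'a) set" where
  "lin_maps A B = {D. (\<forall>x. x \<notin> B \<longrightarrow> D x = 0) \<and> (\<forall>x\<in>B. D x \<in> B) \<and>
      (\<forall>x\<in>B. \<forall>y\<in>B. D (x + y) = D x + D y) \<and>
      (\<forall>a\<in>A. \<forall>x\<in>B. D (a * x) = a * D x)}"

definition commut :: "'a::field set \<Rightarrow> 'a \<Rightarrow> ('a \<Rightarrow> 'a) \<Rightarrow> 'a \<Rightarrow> 'a" where
  "commut B b D = (\<lambda>x. if x \<in> B then b * D x - D (b * x) else 0)"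

definition Diff :: "'a::field set \<Rightarrow> 'a set \<Rightarrow> ('a \<Rightarrow> 'a) set" where
  "Diff A B = (\<Union>n. {D \<in> lin_maps A B.
      \<forall>bs. length bs = Suc n \<longrightarrow> set bs \<subseteq> B \<longrightarrow> foldr (commut B) bs D = (\<lambda>_. 0)})"

definition restr :: "'a set \<Rightarrow> ('a \<Rightarrow> 'a::field) \<Rightarrow> 'a \<Rightarrow> 'a" where
  "restr W D = (\<lambda>x. if x \<in> W then D x else 0)"

end

theory Submission
  imports Defs "HOL-Computational_Algebra.Computational_Algebra" "HOL-Library.Multiset"
begin

lemma field_gen_sub: "is_subfield (field_gen A)"
  unfolding field_gen_def is_subfield_def by auto

lemma field_gen_incl: "A \<subseteq> field_gen A"
  unfolding field_gen_def by auto

lemma field_gen_least: "A \<subseteq> F \<Longrightarrow> is_subfield F \<Longrightarrow> field_gen A \<subseteq> F"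
  unfolding field_gen_def by auto

lemma field_gen_mono: "A \<subseteq> B \<Longrightarrow> field_gen A \<subseteq> field_gen B"
  unfolding field_gen_def by auto

lemma commut_UNIV: "commut UNIV b G = (\<lambda>x. b * G x - G (b * x))"
  unfolding commut_def by simp

definition Ord :: "nat \<Rightarrow> ('a::field \<Rightarrow> 'a) set" where
  "Ord m = {G. \<forall>bs. length bs = m \<longrightarrow> foldr (commut UNIV) bs G = (\<lambda>_. 0)}"

lemma lin_maps_UNIV: "lin_maps A UNIV = {D. (\<forall>x y. D (x + y) = D x + D y) \<and> (\<forall>a\<in>A. \<forall>x. D (a * x) = a * D x)}"
  unfolding lin_maps_def by auto

lemma ad_lin:
  assumes "G \<in> lin_maps A UNIV" shows "commut UNIV b G \<in> lin_maps A UNIV"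
  using assms unfolding lin_maps_UNIV commut_UNIV by (auto simp: algebra_simps)

lemma foldr_ad_lin:
  assumes "G \<in> lin_maps A UNIV" shows "foldr (commut UNIV) bs G \<in> lin_maps A UNIV"
  using assms by (induction bs) (auto intro: ad_lin)

lemma foldr_add: "foldr (commut UNIV) bs (\<lambda>x. G x + H x) = (\<lambda>x. foldr (commut UNIV) bs G x + foldr (commut UNIV) bs H x)"
  by (induction bs) (auto simp: commut_UNIV algebra_simps)

lemma foldr_L: "foldr (commut UNIV) bs (\<lambda>x. c * G x) = (\<lambda>x. c * foldr (commut UNIV) bs G x)"
  by (induction bs) (auto simp: commut_UNIV algebra_simps)

lemma foldr_R: "foldr (commut UNIV) bs (\<lambda>x. G (c * x)) = (\<lambda>x. foldr (commut UNIV) bs G (c * x))"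
  by (induction bs) (auto simp: commut_UNIV algebra_simps)

lemma Ord_add: "G \<in> Ord m \<Longrightarrow> H \<in> Ord m \<Longrightarrow> (\<lambda>x. G x + H x) \<in> Ord m"
  unfolding Ord_def by (simp add: foldr_add)

lemma Ord_L: "G \<in> Ord m \<Longrightarrow> (\<lambda>x. c * G x) \<in> Ord m"
  unfolding Ord_def by (simp add: foldr_L)

lemma Ord_R: "G \<in> Ord m \<Longrightarrow> (\<lambda>x. G (c * x)) \<in> Ord m"
  unfolding Ord_def by (simp add: foldr_R)

lemma Ord_0: "(\<lambda>_. 0) \<in> Ord m"
  using Ord_L[of "\<lambda>_. 0" m 0] unfolding Ord_def by (simp add: foldr_L[of _ 0, simplified])

lemma ad_comm: "commut UNIV b (commut UNIV c G) = commut UNIV c (commut UNIV b G)"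
  by (auto simp: commut_UNIV algebra_simps)

lemma foldr_ad_comm: "foldr (commut UNIV) ys (commut UNIV b G) = commut UNIV b (foldr (commut UNIV) ys G)"
  by (induction ys) (auto simp: ad_comm)

lemma Ord_Suc: "(\<And>b. commut UNIV b G \<in> Ord m) \<Longrightarrow> G \<in> Ord (Suc m)"
  unfolding Ord_def by (auto simp: length_Suc_conv foldr_ad_comm[symmetric])

lemma t1: fixes G :: "'a::field \<Rightarrow> 'a" assumes Gadd: "\<And>x y. G (x + y) = G x + G y" shows
 "commut UNIV (x + y) G = (\<lambda>z. commut UNIV x G z + commut UNIV y G z)"
  by (simp add: commut_UNIV distrib_right Gadd fun_eq_iff)
lemma t2: fixes G :: "'a::field \<Rightarrow> 'a" shows "commut UNIV (x * y) G = (\<lambda>z. x * commut UNIV y G z + commut UNIV x G (y * z))"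
  by (simp add: commut_UNIV right_diff_distrib mult.assoc mult.left_commute)
lemma t3: fixes G :: "'a::field \<Rightarrow> 'a" assumes Gneg: "\<And>x. G (- x) = - G x" shows "commut UNIV (- x) G = (\<lambda>z. (-1) * commut UNIV x G z)"
  by (simp add: commut_UNIV Gneg)
lemma t4: fixes G :: "'a::field \<Rightarrow> 'a" assumes "x \<noteq> 0" shows "commut UNIV (inverse x) G = (\<lambda>z. (- inverse x) * commut UNIV x G (inverse x * z))"
proof
  fix z
  have e: "x * (inverse x * z) = z" using assms by (simp add: mult.assoc[symmetric])
  have e2: "- inverse x * (x * G (inverse x * z)) = - G (inverse x * z)" using assms by (simp add: mult.assoc[symmetric])
  show "commut UNIV (inverse x) G z = (- inverse x) * commut UNIV x G (inverse x * z)"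
    unfolding commut_UNIV e right_diff_distrib e2 by simp
qed

lemma ad_field:
  assumes G: "G \<in> lin_maps A UNIV" and A: "is_subfield A"
    and gen: "field_gen (A \<union> S) = UNIV" and hS: "\<forall>s\<in>S. commut UNIV s G \<in> Ord m"
  shows "commut UNIV b G \<in> Ord m"
proof -
  let ?T = "{b. commut UNIV b G \<in> Ord m}"
  have h: "\<forall>a\<in>A. \<forall>x. G (a*x) = a * G x" using G by (simp add: lin_maps_UNIV)
  have A0: "0 \<in> A" and Am1: "-1 \<in> A" using A unfolding is_subfield_def by auto
  have G0: "G 0 = 0" using h[rule_format, OF A0, of 0] by simp
  have Gneg: "G (- x) = - G x" for x using h[rule_format, OF Am1, of x] by simp
  have "is_subfield ?T"
    unfolding is_subfield_def
  proof (intro conjI ballI impI)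
    show "0 \<in> ?T" using Ord_0 by (simp add: commut_UNIV G0)
    show "1 \<in> ?T" using Ord_0 by (simp add: commut_UNIV)
  next
    fix x y assume x: "x \<in> ?T" and y: "y \<in> ?T"
    have "commut UNIV (x + y) G = (\<lambda>z. commut UNIV x G z + commut UNIV y G z)"
      by (rule t1) (use G in \<open>simp add: lin_maps_UNIV\<close>)
    then show "x + y \<in> ?T" using Ord_add x y by simp
    have "commut UNIV (x * y) G = (\<lambda>z. x * commut UNIV y G z + commut UNIV x G (y * z))"
      by (rule t2)
    then show "x * y \<in> ?T"
      using Ord_add[OF Ord_L[OF y[simplified], of x] Ord_R[OF x[simplified], of y]] by simp
  next
    fix x assume x: "x \<in> ?T"
    have "commut UNIV (- x) G = (\<lambda>z. (-1) * commut UNIV x G z)"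
      by (rule t3) (rule Gneg)
    then show "- x \<in> ?T" using Ord_L[OF x[simplified], of "-1"] by simp
    assume "x \<noteq> 0"
    have "commut UNIV (inverse x) G = (\<lambda>z. (- inverse x) * commut UNIV x G (inverse x * z))"
      using \<open>x \<noteq> 0\<close> by (rule t4)
    then show "inverse x \<in> ?T" using Ord_L[OF Ord_R[OF x[simplified], of "inverse x"], of "- inverse x"] by simp
  qed
  moreover have "A \<subseteq> ?T"
  proof
    fix a assume "a \<in> A"
    then have "commut UNIV a G = (\<lambda>_. 0)" using G by (auto simp: commut_UNIV lin_maps_UNIV)
    then show "a \<in> ?T" using Ord_0 by simp
  qed
  moreover have "S \<subseteq> ?T" using hS by auto
  ultimately have "field_gen (A \<union> S) \<subseteq> ?T" by (intro field_gen_least) auto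
  then show ?thesis using gen by auto
qed

definition Phi :: "('a::field \<Rightarrow> 'a) \<Rightarrow> 'a \<Rightarrow> nat \<Rightarrow> 'a poly \<Rightarrow> 'a \<Rightarrow> 'a" where
  "Phi G b N P = (\<lambda>x. \<Sum>k<N. coeff P k * G (b^k * x))"

lemma Phi_ext: "degree P < N \<Longrightarrow> Phi G b (Suc N) P = Phi G b N P"
  unfolding Phi_def by (auto simp: coeff_eq_0)

lemma Phi_R: "Phi G b N P (b * x) = Phi G b (Suc N) (pCons 0 P) x"
  unfolding Phi_def sum.lessThan_Suc_shift by (simp add: mult_ac)

lemma Phi_lin: "Phi G b N (smult c P - Q) x = c * Phi G b N P x - Phi G b N Q x"
  unfolding Phi_def by (simp add: sum_subtractf sum_distrib_left algebra_simps)

lemma ad_pow_Phi: "(commut UNIV b ^^ n) G = Phi G b (Suc n) ([:b, -1:] ^ n)"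
proof (induction n)
  case 0
  then show ?case by (simp add: Phi_def)
next
  case (Suc n)
  let ?P = "[:b, -1:] ^ n"
  have dP: "degree ?P \<le> n"
    using degree_power_le[of "[:b, -1:]" n] by simp
  have "(commut UNIV b ^^ Suc n) G = commut UNIV b (Phi G b (Suc n) ?P)"
    using Suc by simp
  also have "\<dots> = (\<lambda>x. b * Phi G b (Suc (Suc n)) ?P x - Phi G b (Suc (Suc n)) (pCons 0 ?P) x)"
    using dP by (simp add: commut_UNIV Phi_R Phi_ext)
  also have "\<dots> = Phi G b (Suc (Suc n)) (smult b ?P - pCons 0 ?P)"
    by (rule ext) (simp only: Phi_lin)
  also have "smult b ?P - pCons 0 ?P = [:b, -1:] ^ Suc n"
    by (simp add: mult_pCons_left)
  finally show ?case .
qed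

lemma ad_pow_q:
  assumes pr: "prime CHAR('a::field)" and q: "q = CHAR('a) ^ n"
    and G: "G \<in> lin_maps A UNIV" and bq: "(b::'a) ^ q \<in> A"
  shows "(commut UNIV b ^^ q) G = (\<lambda>_. 0)"
proof
  fix x
  have qpos: "q > 0" using q pr by (simp add: prime_gt_0_nat)
  have e1: "[:b, -1:] = [:b:] + monom (-1) 1"
    by (simp add: monom_Suc monom_0)
  have prp: "prime CHAR('a poly)" using pr by simp
  have "[:b, -1:] ^ q = [:b:] ^ q + monom (-1) 1 ^ q"
    unfolding e1 by (rule freshmans_dream'[OF prp]) (simp add: q)
  also have "\<dots> = [:b ^ q:] + monom ((-1) ^ q) q"
    by (simp add: poly_const_pow monom_power)
  finally have P: "[:b, -1:] ^ q = [:b ^ q:] + monom ((-1) ^ q) q" .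
  have "(1 + -1::'a) ^ q = 1 ^ q + (-1) ^ q"
    by (rule freshmans_dream'[OF pr]) (simp add: q)
  then have m1: "(1::'a) + (-1) ^ q = 0" using qpos by (simp add: power_0_left)
  have "(commut UNIV b ^^ q) G x = Phi G b (Suc q) ([:b ^ q:] + monom ((-1) ^ q) q) x"
    by (simp add: ad_pow_Phi P)
  also have "\<dots> = b ^ q * G x + (-1) ^ q * G (b ^ q * x)"
  proof -
    have h1: "(\<Sum>k<Suc q. coeff [:b ^ q:] k * G (b^k*x)) = b ^ q * G x"
      by (simp add: lessThan_Suc_eq_insert_0 sum.reindex)
    have "(\<Sum>k<q. coeff (monom ((-1::'a) ^ q) q) k * G (b^k*x)) = 0"
      by (rule sum.neutral) (auto simp: coeff_monom)
    then have h2: "(\<Sum>k<Suc q. coeff (monom ((-1::'a) ^ q) q) k * G (b^k*x)) = (-1) ^ q * G (b ^ q * x)"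
      unfolding sum.lessThan_Suc by simp
    show ?thesis unfolding Phi_def coeff_add distrib_right sum.distrib h1 h2 ..
  qed
  also have "\<dots> = (1 + (-1) ^ q) * (b ^ q * G x)"
  proof -
    have "G (b ^ q * x) = b ^ q * G x" using G bq by (simp add: lin_maps_UNIV)
    then show ?thesis by (simp only: distrib_right mult_1_left)
  qed
  also have "\<dots> = 0" by (simp only: m1 mult_zero_left)
  finally show "(commut UNIV b ^^ q) G x = 0" .
qed

lemma foldr_perm:
  assumes "mset xs = mset ys"
  shows "foldr (commut UNIV) xs = foldr (commut UNIV) (ys :: 'a::field list)"
proof -
  have c: "commut UNIV y \<circ> commut UNIV x = commut UNIV x \<circ> commut UNIV (y::'a)" for x y
    by (rule ext) (simp add: ad_comm)
  have "foldr (commut UNIV) xs = fold (commut UNIV) xs" by (rule foldr_fold) (rule c)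
  also have "\<dots> = fold (commut UNIV) ys" by (rule fold_multiset_equiv) (auto simp: c assms)
  also have "\<dots> = foldr (commut UNIV) ys" by (rule foldr_fold[symmetric]) (rule c)
  finally show ?thesis .
qed

lemma pigeon:
  assumes "set gs \<subseteq> S" "finite S" "length gs = card S * (q - 1) + 1"
  shows "\<exists>s\<in>S. q \<le> count_list gs s"
proof (rule ccontr)
  assume "\<not> ?thesis"
  then have "\<forall>s\<in>S. count_list gs s \<le> q - 1" by auto
  then have "sum (count_list gs) S \<le> sum (\<lambda>_. q - 1) S" by (intro sum_mono) auto
  then have "length gs \<le> card S * (q - 1)" using sum_count_set[OF assms(1,2)] by simp
  then show False using assms(3) by simp
qed

lemma top_zero:
  assumes pr: "prime CHAR('a::field)" and q: "q = CHAR('a) ^ n"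
    and pw: "\<forall>s\<in>S. (s::'a) ^ q \<in> A" and fin: "finite S"
    and H: "H \<in> lin_maps A UNIV" and gs: "set gs \<subseteq> S" "length gs = card S * (q - 1) + 1"
  shows "foldr (commut UNIV) gs H = (\<lambda>_. 0)"
proof -
  obtain s where s: "s \<in> S" "q \<le> count_list gs s" using pigeon[OF gs(1) fin gs(2)] by blast
  have sub: "replicate_mset q s \<subseteq># mset gs"
    using s(2) by (simp add: subseteq_mset_def count_mset)
  obtain rs where rs: "mset rs = mset gs - replicate_mset q s" using ex_mset by blast
  have "mset (replicate q s @ rs) = mset gs"
    using sub rs by (simp add: subset_mset.add_diff_inverse)
  then have "foldr (commut UNIV) gs H = foldr (commut UNIV) (replicate q s @ rs) H"
    using foldr_perm by metis
  also have "\<dots> = (commut UNIV s ^^ q) (foldr (commut UNIV) rs H)" by simp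
  also have "\<dots> = (\<lambda>_. 0)"
    by (rule ad_pow_q[OF pr q foldr_ad_lin[OF H]]) (use pw s in auto)
  finally show ?thesis .
qed

lemma lin_in_Diff:
  assumes pr: "prime CHAR('a::field)" and q: "q = CHAR('a) ^ n"
    and A: "is_subfield A" and gen: "field_gen (A \<union> S) = UNIV" and fin: "finite S"
    and pw: "\<forall>s\<in>S. (s::'a) ^ q \<in> A"
    and G: "G \<in> lin_maps A UNIV"
  shows "G \<in> Diff A UNIV"
proof -
  let ?M = "card S * (q - 1)"
  have main: "\<forall>gs. set gs \<subseteq> S \<longrightarrow> length gs + d = ?M + 1 \<longrightarrow> foldr (commut UNIV) gs G \<in> Ord d" for d
  proof (induction d)
    case 0
    show ?case
    proof (intro allI impI)
      fix gs assume "set gs \<subseteq> S" "length gs + 0 = ?M + 1"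
      then have "foldr (commut UNIV) gs G = (\<lambda>_. 0)"
        using top_zero[OF pr q pw fin G] by simp
      then show "foldr (commut UNIV) gs G \<in> Ord 0" by (simp add: Ord_def)
    qed
  next
    case (Suc d)
    show ?case
    proof (intro allI impI)
      fix gs assume gs: "set gs \<subseteq> S" "length gs + Suc d = ?M + 1"
      let ?H = "foldr (commut UNIV) gs G"
      have "\<forall>s\<in>S. commut UNIV s ?H \<in> Ord d"
      proof
        fix s assume "s \<in> S"
        then have "foldr (commut UNIV) (s # gs) G \<in> Ord d"
          using Suc.IH gs by (metis Suc.IH add_Suc add_Suc_shift insert_subset list.set(2) list.size(4) gs(1) gs(2) \<open>s \<in> S\<close> length_Cons)
        then show "commut UNIV s ?H \<in> Ord d" by simp
      qed
      then have "\<And>b. commut UNIV b ?H \<in> Ord d"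
        using ad_field[OF foldr_ad_lin[OF G] A gen] by blast
      then show "?H \<in> Ord (Suc d)" by (rule Ord_Suc)
    qed
  qed
  have "G \<in> Ord (Suc ?M)" using main[of "Suc ?M"] by (metis add_0 empty_subsetI foldr.simps(1) id_apply list.set(1) list.size(3) add.commute Suc_eq_plus1)
  then show ?thesis unfolding Diff_def Ord_def using G by auto
qed


lemma proj_exists:
  fixes F :: "'a::field set"
  assumes F: "is_subfield F"
  shows "\<exists>\<pi>. (\<forall>x. \<pi> x \<in> F) \<and> (\<forall>x\<in>F. \<pi> x = x) \<and> (\<forall>x y. \<pi> (x + y) = \<pi> x + \<pi> y)
            \<and> (\<forall>a\<in>F. \<forall>x. \<pi> (a * x) = a * \<pi> x)"
proof -
  have F0: "0 \<in> F" and F1: "1 \<in> F" and Fadd: "\<And>x y. x \<in> F \<Longrightarrow> y \<in> F \<Longrightarrow> x + y \<in> F"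
    and Fmul: "\<And>x y. x \<in> F \<Longrightarrow> y \<in> F \<Longrightarrow> x * y \<in> F"
    and Fneg: "\<And>x. x \<in> F \<Longrightarrow> - x \<in> F" and Finv: "\<And>x. x \<in> F \<Longrightarrow> x \<noteq> 0 \<Longrightarrow> inverse x \<in> F"
    using F unfolding is_subfield_def by auto
  define \<A> where "\<A> = {C. 0 \<in> C \<and> (\<forall>x\<in>C. \<forall>y\<in>C. x + y \<in> C) \<and> (\<forall>a\<in>F. \<forall>x\<in>C. a * x \<in> C)
        \<and> (\<forall>x\<in>C. x \<in> F \<longrightarrow> x = 0)}"
  have "{0} \<in> \<A>" unfolding \<A>_def by auto
  then have ne: "\<A> \<noteq> {}" by auto
  have "\<exists>M\<in>\<A>. \<forall>X\<in>\<A>. M \<subseteq> X \<longrightarrow> X = M"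
  proof (rule subset_Zorn_nonempty[OF ne])
    fix \<C> assume C: "\<C> \<noteq> {}" "subset.chain \<A> \<C>"
    then have sub: "\<C> \<subseteq> \<A>" and ch: "\<forall>X\<in>\<C>. \<forall>Y\<in>\<C>. X \<subseteq> Y \<or> Y \<subseteq> X"
      unfolding subset.chain_def by auto
    show "\<Union>\<C> \<in> \<A>" unfolding \<A>_def
    proof (intro CollectI conjI ballI impI)
      show "0 \<in> \<Union>\<C>" using C(1) sub unfolding \<A>_def by auto
    next
      fix x y assume "x \<in> \<Union>\<C>" "y \<in> \<Union>\<C>"
      then obtain X Y where XY: "X \<in> \<C>" "Y \<in> \<C>" "x \<in> X" "y \<in> Y" by auto
      show "x + y \<in> \<Union>\<C>"
      proof (cases "X \<subseteq> Y")
        case True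
        then have "x + y \<in> Y" using XY sub unfolding \<A>_def by blast
        then show ?thesis using XY by auto
      next
        case False
        then have "Y \<subseteq> X" using ch XY by blast
        then have "x + y \<in> X" using XY sub unfolding \<A>_def by blast
        then show ?thesis using XY by auto
      qed
    next
      fix a x assume "a \<in> F" "x \<in> \<Union>\<C>"
      then show "a * x \<in> \<Union>\<C>" using sub unfolding \<A>_def by blast
    next
      fix x assume "x \<in> \<Union>\<C>" "x \<in> F"
      then show "x = 0" using sub unfolding \<A>_def by blast
    qed
  qed
  then obtain M where M: "M \<in> \<A>" and Mmax: "\<And>X. X \<in> \<A> \<Longrightarrow> M \<subseteq> X \<Longrightarrow> X = M" by blast
  have M0: "0 \<in> M" and Madd: "\<And>x y. x \<in> M \<Longrightarrow> y \<in> M \<Longrightarrow> x + y \<in> M"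
    and Mmul: "\<And>a x. a \<in> F \<Longrightarrow> x \<in> M \<Longrightarrow> a * x \<in> M"
    and MF: "\<And>x. x \<in> M \<Longrightarrow> x \<in> F \<Longrightarrow> x = 0"
    using M unfolding \<A>_def by auto
  have Mneg: "- x \<in> M" if "x \<in> M" for x
    using Mmul[OF Fneg[OF F1] that] by simp
  have decomp: "\<exists>f\<in>F. x - f \<in> M" for x
  proof (rule ccontr)
    assume nx: "\<not> (\<exists>f\<in>F. x - f \<in> M)"
    define M' where "M' = {c + a * x | c a. c \<in> M \<and> a \<in> F}"
    have "M' \<in> \<A>" unfolding \<A>_def
    proof (intro CollectI conjI ballI impI)
      show "0 \<in> M'" unfolding M'_def using M0 F0 by force
    next
      fix u v assume "u \<in> M'" "v \<in> M'"
      then obtain c a c' a' where "u = c + a * x" "v = c' + a' * x" "c \<in> M" "a \<in> F" "c' \<in> M" "a' \<in> F"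
        unfolding M'_def by auto
      moreover have "c + c' \<in> M" "a + a' \<in> F" using calculation Madd Fadd by auto
      ultimately have "u + v = (c + c') + (a + a') * x \<and> c + c' \<in> M \<and> a + a' \<in> F"
        by (simp add: algebra_simps)
      then show "u + v \<in> M'" unfolding M'_def by blast
    next
      fix b u assume "b \<in> F" "u \<in> M'"
      then obtain c a where "u = c + a * x" "c \<in> M" "a \<in> F"
        unfolding M'_def by auto
      moreover have "b * c \<in> M" "b * a \<in> F" using calculation Mmul Fmul \<open>b \<in> F\<close> by auto
      ultimately have "b * u = (b * c) + (b * a) * x \<and> b * c \<in> M \<and> b * a \<in> F"
        by (simp add: algebra_simps)
      then show "b * u \<in> M'" unfolding M'_def by blast
    next
      fix u assume "u \<in> M'" "u \<in> F"
      then obtain c a where u: "u = c + a * x" "c \<in> M" "a \<in> F"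
        unfolding M'_def by auto
      show "u = 0"
      proof (cases "a = 0")
        case True
        then show ?thesis using u MF \<open>u \<in> F\<close> by auto
      next
        case False
        have "x - inverse a * u = (- inverse a) * c"
          using False u(1) by (simp add: algebra_simps)
        moreover have "(- inverse a) * c \<in> M" using Mmul Fneg Finv u False by blast
        moreover have "inverse a * u \<in> F" using Fmul Finv u False \<open>u \<in> F\<close> by blast
        ultimately have "\<exists>f\<in>F. x - f \<in> M" by (intro bexI[of _ "inverse a * u"]) auto
        then show ?thesis using nx by blast
      qed
    qed
    moreover have "M \<subseteq> M'" unfolding M'_def
    proof
      fix c assume "c \<in> M" then show "c \<in> {c + a * x | c a. c \<in> M \<and> a \<in> F}"
        using F0 by force
    qed
    ultimately have "M' = M" using Mmax by blast
    moreover have "x \<in> M'" unfolding M'_def using M0 F1 by force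
    ultimately have "x - 0 \<in> M" by simp
    then show False using nx F0 by blast
  qed
  then have "\<forall>x. \<exists>f. f \<in> F \<and> x - f \<in> M" by blast
  from choice[OF this] obtain \<pi> where pi0: "\<forall>x. \<pi> x \<in> F \<and> x - \<pi> x \<in> M" by blast
  then have pi: "\<And>x. \<pi> x \<in> F \<and> x - \<pi> x \<in> M" by blast
  have uniq: "f = \<pi> x" if "f \<in> F" "x - f \<in> M" for f x
  proof -
    have "\<pi> x - f = (x - f) + - (x - \<pi> x)" by simp
    also have "\<dots> \<in> M" by (rule Madd[OF that(2) Mneg[OF conjunct2[OF pi[of x]]]])
    finally have "\<pi> x - f \<in> M" .
    moreover have "\<pi> x - f \<in> F" using Fadd[OF conjunct1[OF pi[of x]] Fneg[OF that(1)]] by simp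
    ultimately have "\<pi> x - f = 0" using MF by blast
    then show ?thesis by simp
  qed
  show ?thesis
  proof (intro exI[of _ \<pi>] conjI allI ballI)
    show "\<pi> x \<in> F" for x using pi by blast
    show "\<pi> x = x" if "x \<in> F" for x using uniq[of x x] that M0 by simp
    show "\<pi> (x + y) = \<pi> x + \<pi> y" for x y
    proof -
      have e: "x + y - (\<pi> x + \<pi> y) = (x - \<pi> x) + (y - \<pi> y)" by simp
      have "x + y - (\<pi> x + \<pi> y) \<in> M" unfolding e by (rule Madd[OF conjunct2[OF pi[of x]] conjunct2[OF pi[of y]]])
      moreover have "\<pi> x + \<pi> y \<in> F" using Fadd pi by blast
      ultimately have "\<pi> x + \<pi> y = \<pi> (x + y)" by (intro uniq)
      then show ?thesis by simp
    qed
    show "\<pi> (a * x) = a * \<pi> x" if "a \<in> F" for a x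
    proof -
      have e: "a * x - a * \<pi> x = a * (x - \<pi> x)" by (simp add: algebra_simps)
      have "a * x - a * \<pi> x \<in> M" unfolding e by (rule Mmul[OF that conjunct2[OF pi[of x]]])
      moreover have "a * \<pi> x \<in> F" using Fmul pi that by blast
      ultimately have "a * \<pi> x = \<pi> (a * x)" by (intro uniq)
      then show ?thesis by simp
    qed
  qed
qed


lemma der_1:
  assumes E: "E \<in> derivations F" and F: "is_subfield F"
  shows "E 1 = 0"
proof -
  have "1 \<in> F" using F by (simp add: is_subfield_def)
  then have "E (1 * 1) = 1 * E 1 + 1 * E 1" using E unfolding derivations_def by blast
  then have "E 1 = E 1 + E 1" by (simp only: mult_1_left mult_1_right)
  then show ?thesis by (simp only: add_cancel_right_right)
qed

lemma der_pow:
  assumes E: "E \<in> derivations F" and F: "is_subfield F" and y: "y \<in> F"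
  shows "y ^ m \<in> F \<and> E (y ^ Suc m) = of_nat (Suc m) * y ^ m * E y"
proof (induction m)
  case 0
  then show ?case using F by (simp add: is_subfield_def)
next
  case (Suc m)
  then have ym: "y ^ m \<in> F" by blast
  have ysm: "y ^ Suc m \<in> F" using F ym y by (simp add: is_subfield_def)
  have "E (y ^ Suc (Suc m)) = E (y * y ^ Suc m)" by simp
  also have "\<dots> = y * E (y ^ Suc m) + y ^ Suc m * E y" using E y ysm by (simp add: derivations_def)
  also have "\<dots> = of_nat (Suc (Suc m)) * y ^ Suc m * E y" using Suc by (simp add: algebra_simps)
  finally show ?case using ysm by blast
qed

lemma der_kernel:
  assumes E: "E \<in> derivations F" and F: "is_subfield F"
  shows "is_subfield {x \<in> F. E x = 0}"
proof -
  have Eadd: "\<And>x y. x \<in> F \<Longrightarrow> y \<in> F \<Longrightarrow> E (x + y) = E x + E y"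
    and Emul: "\<And>x y. x \<in> F \<Longrightarrow> y \<in> F \<Longrightarrow> E (x * y) = x * E y + y * E x"
    using E by (auto simp: derivations_def)
  have F0: "0 \<in> F" and F1: "1 \<in> F" and Fadd: "\<And>x y. x \<in> F \<Longrightarrow> y \<in> F \<Longrightarrow> x + y \<in> F"
    and Fmul: "\<And>x y. x \<in> F \<Longrightarrow> y \<in> F \<Longrightarrow> x * y \<in> F"
    and Fneg: "\<And>x. x \<in> F \<Longrightarrow> - x \<in> F" and Finv: "\<And>x. x \<in> F \<Longrightarrow> x \<noteq> 0 \<Longrightarrow> inverse x \<in> F"
    using F unfolding is_subfield_def by auto
  have E1: "E 1 = 0" by (rule der_1[OF E F])
  have "E 0 = E 0 + E 0" using Eadd[OF F0 F0] by (simp only: add_0_right)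
  then have E0: "E 0 = 0" by (simp only: add_cancel_right_right)
  show ?thesis unfolding is_subfield_def
  proof (intro conjI ballI impI)
    show "0 \<in> {x \<in> F. E x = 0}" using F0 E0 by simp
    show "1 \<in> {x \<in> F. E x = 0}" using F1 E1 by simp
  next
    fix x y assume x: "x \<in> {x \<in> F. E x = 0}" and y: "y \<in> {x \<in> F. E x = 0}"
    then show "x + y \<in> {x \<in> F. E x = 0}" using Eadd Fadd by simp
    show "x * y \<in> {x \<in> F. E x = 0}" using x y Emul Fmul by simp
  next
    fix x assume x: "x \<in> {x \<in> F. E x = 0}"
    have "E (x + - x) = E x + E (- x)" using x Fneg Eadd by blast
    then have "E (- x) = 0" using x E0 by simp
    then show "- x \<in> {x \<in> F. E x = 0}" using x Fneg by simp
    assume "x \<noteq> 0"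
    have xi: "inverse x \<in> F" using Finv x \<open>x \<noteq> 0\<close> by simp
    have "E (x * inverse x) = x * E (inverse x) + inverse x * E x" using Emul x xi by simp
    then have "x * E (inverse x) = 0" using \<open>x \<noteq> 0\<close> E1 x by simp
    then show "inverse x \<in> {x \<in> F. E x = 0}" using xi \<open>x \<noteq> 0\<close> by simp
  qed
qed

theorem mainTheorem6:
  fixes p :: nat and W :: "nat \<Rightarrow> 'a::field set" and k :: "'a set"
  assumes charp: "CHAR('a) = p" and ppos: "p > 0"
    and kdef: "k = (\<Inter>n. frob_pow p n)"
    and fg: "\<exists>S. finite S \<and> field_gen (k \<union> S) = (UNIV :: 'a set)"
    and tower: "power_tower p W"
  shows "(\<forall>i\<ge>1. (restr (W (i - 1)) ` (\<Union>n. Diff (W n) UNIV)) \<inter> derivations (W (i - 1))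
                 = rel_derivations (W (i - 1)) (W i))
       \<and> (\<Union>n. Diff (W n) UNIV) \<inter> derivations UNIV = rel_derivations UNIV (W 1)"
proof -
  have pr: "prime CHAR('a)" using charp ppos prime_CHAR_semidom by blast
  have Wsub: "\<And>i. is_subfield (W i)" using tower unfolding power_tower_def by blast
  have Wc: "\<And>i j. j \<le> i \<Longrightarrow> W j = field_gen (W i \<union> frob_pow p j)"
    using tower unfolding power_tower_def compositum_def by blast
  have Wmono: "\<And>i j. j \<le> i \<Longrightarrow> W i \<subseteq> W j"
  proof -
    fix i j :: nat assume "j \<le> i"
    then have "W j = field_gen (W i \<union> frob_pow p j)" by (rule Wc)
    then show "W i \<subseteq> W j" using field_gen_incl[of "W i \<union> frob_pow p j"] by blast
  qed
  have Wfrob: "\<And>j. frob_pow p j \<subseteq> W j"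
  proof -
    fix j
    have "W j = field_gen (W j \<union> frob_pow p j)" by (rule Wc) simp
    then show "frob_pow p j \<subseteq> W j" using field_gen_incl[of "W j \<union> frob_pow p j"] by blast
  qed
  have powW: "\<And>j x. x ^ (p ^ j) \<in> W j" using Wfrob unfolding frob_pow_def by blast
  have W0: "W 0 = UNIV" using Wfrob[of 0] unfolding frob_pow_def by auto
  have kW: "\<And>n. k \<subseteq> W n" using Wfrob unfolding kdef by blast
  obtain S where Sfin: "finite S" and Sgen: "field_gen (k \<union> S) = (UNIV :: 'a set)" using fg by blast
  have genW: "\<And>n. field_gen (W n \<union> S) = UNIV"
    using field_gen_mono[of "k \<union> S"] kW Sgen by (metis Un_mono order_refl top.extremum_uniqueI)
  have part1: "restr (W (i - 1)) ` (\<Union>n. Diff (W n) UNIV) \<inter> derivations (W (i - 1))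
                 = rel_derivations (W (i - 1)) (W i)" if i1: "i \<ge> 1" for i
  proof
    let ?F = "W (i - 1)"
    obtain j where ij: "i = Suc j" using i1 by (cases i) auto
    show "restr ?F ` (\<Union>n. Diff (W n) UNIV) \<inter> derivations ?F \<subseteq> rel_derivations ?F (W i)"
    proof
      fix E assume "E \<in> restr ?F ` (\<Union>n. Diff (W n) UNIV) \<inter> derivations ?F"
      then obtain n D where D: "D \<in> Diff (W n) UNIV" and ED: "E = restr ?F D" and E: "E \<in> derivations ?F"
        by blast
      have Dlin: "D \<in> lin_maps (W n) UNIV" using D unfolding Diff_def by blast
      let ?Z = "{x \<in> ?F. E x = 0}"
      have Zsub: "is_subfield ?Z" by (rule der_kernel[OF E Wsub])
      define m where "m = max n i"
      have Wi: "W i = field_gen (W m \<union> frob_pow p i)" by (rule Wc) (simp add: m_def)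
      have E1: "E 1 = 0" by (rule der_1[OF E Wsub])
      have F1: "1 \<in> ?F" using Wsub[of "i - 1"] by (simp add: is_subfield_def)
      have D1: "D 1 = 0" using E1 F1 ED by (simp add: restr_def)
      have "W m \<subseteq> ?Z"
      proof
        fix w assume w: "w \<in> W m"
        have wn: "w \<in> W n" using w Wmono[of n m] by (auto simp: m_def)
        have "i - 1 \<le> m" by (simp add: m_def)
        then have wF: "w \<in> ?F" using w Wmono[of "i - 1" m] by blast
        have "\<forall>a\<in>W n. \<forall>x. D (a * x) = a * D x" using Dlin by (simp add: lin_maps_UNIV)
        then have "D (w * 1) = w * D 1" using wn by blast
        then have "D w = 0" using D1 by simp
        then show "w \<in> ?Z" using wF ED by (simp add: restr_def)
      qed
      moreover have "frob_pow p i \<subseteq> ?Z"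
      proof
        fix z :: 'a assume "z \<in> frob_pow p i"
        then obtain x :: 'a where z: "z = x ^ (p ^ i)" unfolding frob_pow_def by blast
        let ?y = "x ^ (p ^ j) :: 'a"
        have yF: "?y \<in> ?F" using powW[where j=j and x=x] ij by simp
        have zy: "z = ?y ^ p" using z ij by (simp add: power_mult[symmetric] mult.commute)
        obtain r where pr': "p = Suc r" using ppos by (cases p) auto
        have op: "(of_nat (Suc r) :: 'a) = 0" using charp pr' of_nat_CHAR by metis
        have "E z = E (?y ^ Suc r)" using zy pr' by simp
        also have "\<dots> = of_nat (Suc r) * ?y ^ r * E ?y" using der_pow[OF E Wsub yF] by blast
        also have "\<dots> = 0" by (simp only: op mult_zero_left)
        finally have "E z = 0" .
        moreover have "z \<in> ?F" using powW[where j=i and x=x] z Wmono[of "i - 1" i] by auto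
        ultimately show "z \<in> ?Z" by simp
      qed
      ultimately have "W i \<subseteq> ?Z" unfolding Wi by (intro field_gen_least Zsub) auto
      then show "E \<in> rel_derivations ?F (W i)" using E unfolding rel_derivations_def by blast
    qed
    show "rel_derivations ?F (W i) \<subseteq> restr ?F ` (\<Union>n. Diff (W n) UNIV) \<inter> derivations ?F"
    proof
      fix E assume "E \<in> rel_derivations ?F (W i)"
      then have E: "E \<in> derivations ?F" and EW: "\<forall>a\<in>W i. E a = 0"
        unfolding rel_derivations_def by auto
      have Eadd: "\<And>x y. x \<in> ?F \<Longrightarrow> y \<in> ?F \<Longrightarrow> E (x + y) = E x + E y"
        and Emul: "\<And>x y. x \<in> ?F \<Longrightarrow> y \<in> ?F \<Longrightarrow> E (x * y) = x * E y + y * E x"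
        and Eout: "\<And>x. x \<notin> ?F \<Longrightarrow> E x = 0"
        using E by (auto simp: derivations_def)
      obtain \<pi> where pi1: "\<forall>x. \<pi> x \<in> ?F" and pi2: "\<forall>x\<in>?F. \<pi> x = x"
        and pi3: "\<forall>x y. \<pi> (x + y) = \<pi> x + \<pi> y" and pi4: "\<forall>a\<in>?F. \<forall>x. \<pi> (a * x) = a * \<pi> x"
        using proj_exists[OF Wsub[of "i - 1"]] by blast
      define D where "D = (\<lambda>x. E (\<pi> x))"
      have WiF: "W i \<subseteq> ?F" using Wmono[of "i - 1" i] by simp
      have "D \<in> lin_maps (W i) UNIV"
        unfolding lin_maps_UNIV
      proof (intro CollectI conjI allI ballI)
        fix x y show "D (x + y) = D x + D y" unfolding D_def using pi1 pi3 Eadd by simp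
      next
        fix a x assume a: "a \<in> W i"
        have aF: "a \<in> ?F" using a WiF by blast
        have "D (a * x) = E (a * \<pi> x)" unfolding D_def using pi4 aF by simp
        also have "\<dots> = a * E (\<pi> x) + \<pi> x * E a" using Emul aF pi1 by simp
        also have "\<dots> = a * D x" using EW a unfolding D_def by simp
        finally show "D (a * x) = a * D x" .
      qed
      moreover have q: "p ^ i = CHAR('a) ^ i" using charp by simp
      moreover have pw: "\<forall>s\<in>S. s ^ (p ^ i) \<in> W i" using powW by blast
      ultimately have "D \<in> Diff (W i) UNIV"
        using lin_in_Diff[OF pr _ Wsub[of i] genW[of i] Sfin] by blast
      moreover have "restr ?F D = E"
      proof
        fix x show "restr ?F D x = E x"
          unfolding restr_def D_def using pi2 Eout by auto
      qed
      ultimately show "E \<in> restr ?F ` (\<Union>n. Diff (W n) UNIV) \<inter> derivations ?F"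
        using E by blast
    qed
  qed
  have restrU: "restr UNIV D = D" for D :: "'a \<Rightarrow> 'a" unfolding restr_def by simp
  have "restr UNIV ` (\<Union>n. Diff (W n) UNIV) = (\<Union>n. Diff (W n) UNIV)"
    by (simp add: restrU)
  then have "(\<Union>n. Diff (W n) UNIV) \<inter> derivations UNIV = rel_derivations UNIV (W 1)"
    using part1[of 1] W0 by simp
  then show ?thesis using part1 by blast
qed

end
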